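(* Let $G$ be a group, $N\trianglelefteq G$ a normal subgroup and $\mathcal{H}$ a family of proper subgroups of $G$. If $\mathcal{H}$ is strongly divided by $N$, then there is a homotopy equivalence $$\operatorname{CC}(G,\mathcal{H})\simeq \operatorname{CC}(G/N,\overline{\mathcal{H}})\ast\operatorname{CC}(N,\mathcal{H}\cap N).$$
   Context: For a group $G$ and a family $\mathcal{K}$ of subgroups, the coset complex $\operatorname{CC}(G,\mathcal{K})$ is the simplicial complex whose vertices are the cosets $gK$ ($g\in G$, $K\in\mathcal{K}$; cosets of different members of $\mathcal{K}$ are different vertices) and where a finite set of vertices spans a simplex iff the cosets have nonempty common intersection; homotopy equivalences and joins ($\ast$) refer to geometric realisations. Write $\mathcal{H}=\mathcal{H}_N\sqcup\mathcal{H}^N$ with $\mathcal{H}_N=\{H\in\mathcal{H}: HN\neq G\}$ and $\mathcal{H}^N=\{K\in\mathcal{H}: KN=G\}$. For $H\le G$ let $\overline{H}$ be its image in $G/N$. Set $\overline{\mathcal{H}}=\{\overline{H}: H\in\mathcal{H}_N\}$ and $\mathcal{H}\cap N=\{K\cap N: K\in\mathcal{H}^N\}$. $\mathcal{H}$ is strongly divided by $N$ if (1) $N\subseteq H$ for all $H\in\mathcal{H}_N$, and (2) $(K_1\cap\dots\cap K_m)N=G$ for all finite collections $K_1,\dots,K_m\in\mathcal{H}^N$. *)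

theory Defs
  imports "HOL-Analysis.Analysis" "HOL-Algebra.Algebra"
begin

text \<open>An (abstract) simplicial complex is represented by its set of simplices:
  finite nonempty sets of vertices.\<close>

text \<open>Closed geometric simplex spanned by a finite vertex set, as a set of
  barycentric-coordinate functions.\<close>
definition geom_simplex :: "'v set \<Rightarrow> ('v \<Rightarrow> real) set" where
  "geom_simplex \<sigma> = {f. (\<forall>v. f v \<ge> 0) \<and> (\<forall>v. v \<notin> \<sigma> \<longrightarrow> f v = 0) \<and> sum f \<sigma> = 1}"

definition realization :: "'v set set \<Rightarrow> ('v \<Rightarrow> real) topology" where
  "realization K = topology (\<lambda>U. U \<subseteq> (\<Union>\<sigma>\<in>K. geom_simplex \<sigma>) \<and>
      (\<forall>\<sigma>\<in>K. openin (subtopology (powertop_real UNIV) (geom_simplex \<sigma>)) (U \<inter> geom_simplex \<sigma>)))"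

definition simplicial_join :: "'v set set \<Rightarrow> 'w set set \<Rightarrow> ('v + 'w) set set" where
  "simplicial_join K L =
     {Inl ` \<sigma> \<union> Inr ` \<tau> | \<sigma> \<tau>. \<sigma> \<in> insert {} K \<and> \<tau> \<in> insert {} L} - {{}}"

text \<open>Vertices are pairs (K, gK): cosets of different members of the family are
  different vertices. A finite nonempty set of vertices is a simplex iff the cosets
  have nonempty common intersection.\<close>
definition coset_complex :: "('a, 'b) monoid_scheme \<Rightarrow> 'a set set \<Rightarrow> ('a set \<times> 'a set) set set" where
  "coset_complex G \<H> =
     {\<sigma>. finite \<sigma> \<and> \<sigma> \<noteq> {} \<and>
          \<sigma> \<subseteq> {(K, g <#\<^bsub>G\<^esub> K) | g K. g \<in> carrier G \<and> K \<in> \<H>} \<and>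
          \<Inter> (snd ` \<sigma>) \<noteq> {}}"

definition lower_fam :: "('a, 'b) monoid_scheme \<Rightarrow> 'a set set \<Rightarrow> 'a set \<Rightarrow> 'a set set" where
  "lower_fam G \<H> N = {H \<in> \<H>. H <#>\<^bsub>G\<^esub> N \<noteq> carrier G}"

definition upper_fam :: "('a, 'b) monoid_scheme \<Rightarrow> 'a set set \<Rightarrow> 'a set \<Rightarrow> 'a set set" where
  "upper_fam G \<H> N = {K \<in> \<H>. K <#>\<^bsub>G\<^esub> N = carrier G}"

text \<open>Image of a subgroup H in G/N (elements of G Mod N are the cosets N h).\<close>
definition quot_image :: "('a, 'b) monoid_scheme \<Rightarrow> 'a set \<Rightarrow> 'a set \<Rightarrow> 'a set set" where
  "quot_image G N H = (\<lambda>h. N #>\<^bsub>G\<^esub> h) ` H"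

definition quot_fam :: "('a, 'b) monoid_scheme \<Rightarrow> 'a set set \<Rightarrow> 'a set \<Rightarrow> 'a set set set" where
  "quot_fam G \<H> N = quot_image G N ` lower_fam G \<H> N"

definition inter_fam :: "('a, 'b) monoid_scheme \<Rightarrow> 'a set set \<Rightarrow> 'a set \<Rightarrow> 'a set set" where
  "inter_fam G \<H> N = (\<lambda>K. K \<inter> N) ` upper_fam G \<H> N"

definition strongly_divided :: "('a, 'b) monoid_scheme \<Rightarrow> 'a set set \<Rightarrow> 'a set \<Rightarrow> bool" where
  "strongly_divided G \<H> N \<longleftrightarrow>
     (\<forall>H \<in> lower_fam G \<H> N. N \<subseteq> H) \<and>
     (\<forall>F. finite F \<and> F \<noteq> {} \<and> F \<subseteq> upper_fam G \<H> N \<longrightarrow> (\<Inter>F) <#>\<^bsub>G\<^esub> N = carrier G)"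

end

theory Submission
  imports Defs
begin


lemma istop_real: "istopology (\<lambda>U. U \<subseteq> (\<Union>\<sigma>\<in>K. geom_simplex \<sigma>) \<and>
      (\<forall>\<sigma>\<in>K. openin (subtopology (powertop_real UNIV) (geom_simplex \<sigma>)) (U \<inter> geom_simplex \<sigma>)))"
  unfolding istopology_def
proof (rule conjI; intro allI impI)
  fix S T assume a: "S \<subseteq> (\<Union>\<sigma>\<in>K. geom_simplex \<sigma>) \<and>
      (\<forall>\<sigma>\<in>K. openin (subtopology (powertop_real UNIV) (geom_simplex \<sigma>)) (S \<inter> geom_simplex \<sigma>))"
    and b: "T \<subseteq> (\<Union>\<sigma>\<in>K. geom_simplex \<sigma>) \<and>
      (\<forall>\<sigma>\<in>K. openin (subtopology (powertop_real UNIV) (geom_simplex \<sigma>)) (T \<inter> geom_simplex \<sigma>))"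
  show "S \<inter> T \<subseteq> (\<Union>\<sigma>\<in>K. geom_simplex \<sigma>) \<and>
      (\<forall>\<sigma>\<in>K. openin (subtopology (powertop_real UNIV) (geom_simplex \<sigma>)) (S \<inter> T \<inter> geom_simplex \<sigma>))"
  proof (intro conjI ballI)
    show "S \<inter> T \<subseteq> (\<Union>\<sigma>\<in>K. geom_simplex \<sigma>)" using a by blast
    fix \<sigma> assume "\<sigma> \<in> K"
    then have "openin (subtopology (powertop_real UNIV) (geom_simplex \<sigma>)) ((S \<inter> geom_simplex \<sigma>) \<inter> (T \<inter> geom_simplex \<sigma>))"
      using a b by (intro openin_Int[of _ "S \<inter> geom_simplex \<sigma>" "T \<inter> geom_simplex \<sigma>"]) auto
    moreover have "(S \<inter> geom_simplex \<sigma>) \<inter> (T \<inter> geom_simplex \<sigma>) = S \<inter> T \<inter> geom_simplex \<sigma>" by blast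
    ultimately show "openin (subtopology (powertop_real UNIV) (geom_simplex \<sigma>)) (S \<inter> T \<inter> geom_simplex \<sigma>)" by simp
  qed
next
  fix \<K> assume a: "\<forall>U\<in>\<K>. U \<subseteq> (\<Union>\<sigma>\<in>K. geom_simplex \<sigma>) \<and>
      (\<forall>\<sigma>\<in>K. openin (subtopology (powertop_real UNIV) (geom_simplex \<sigma>)) (U \<inter> geom_simplex \<sigma>))"
  show "\<Union>\<K> \<subseteq> (\<Union>\<sigma>\<in>K. geom_simplex \<sigma>) \<and>
      (\<forall>\<sigma>\<in>K. openin (subtopology (powertop_real UNIV) (geom_simplex \<sigma>)) (\<Union>\<K> \<inter> geom_simplex \<sigma>))"
  proof (intro conjI ballI)
    show "\<Union>\<K> \<subseteq> (\<Union>\<sigma>\<in>K. geom_simplex \<sigma>)" using a by blast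
    fix \<sigma> assume "\<sigma> \<in> K"
    then have "openin (subtopology (powertop_real UNIV) (geom_simplex \<sigma>)) (\<Union>U\<in>\<K>. U \<inter> geom_simplex \<sigma>)"
      using a by (intro openin_Union) auto
    moreover have "(\<Union>U\<in>\<K>. U \<inter> geom_simplex \<sigma>) = \<Union>\<K> \<inter> geom_simplex \<sigma>" by blast
    ultimately show "openin (subtopology (powertop_real UNIV) (geom_simplex \<sigma>)) (\<Union>\<K> \<inter> geom_simplex \<sigma>)" by simp
  qed
qed

lemma openin_realization: "openin (realization K) U \<longleftrightarrow> U \<subseteq> (\<Union>\<sigma>\<in>K. geom_simplex \<sigma>) \<and>
      (\<forall>\<sigma>\<in>K. openin (subtopology (powertop_real UNIV) (geom_simplex \<sigma>)) (U \<inter> geom_simplex \<sigma>))"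
  unfolding realization_def by (simp add: istop_real)

lemma topspace_realization: "topspace (realization K) = (\<Union>\<sigma>\<in>K. geom_simplex \<sigma>)"
proof
  show "topspace (realization K) \<subseteq> (\<Union>\<sigma>\<in>K. geom_simplex \<sigma>)"
    using openin_realization[of K "topspace (realization K)"] by simp
  have "openin (realization K) (\<Union>\<sigma>\<in>K. geom_simplex \<sigma>)"
  proof (subst openin_realization, intro conjI ballI)
    fix \<sigma> assume "\<sigma> \<in> K"
    then have "(\<Union>\<sigma>\<in>K. geom_simplex \<sigma>) \<inter> geom_simplex \<sigma> = geom_simplex \<sigma>"
      by auto
    then show "openin (subtopology (powertop_real UNIV) (geom_simplex \<sigma>)) ((\<Union>\<sigma>\<in>K. geom_simplex \<sigma>) \<inter> geom_simplex \<sigma>)"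
      by (simp add: openin_subtopology_refl)
  qed auto
  then show "(\<Union>\<sigma>\<in>K. geom_simplex \<sigma>) \<subseteq> topspace (realization K)"
    by (rule openin_subset)
qed

lemma continuous_realization:
  assumes F: "continuous_map (powertop_real UNIV) (powertop_real UNIV) F"
    and S: "\<And>\<sigma>. \<sigma> \<in> K \<Longrightarrow> \<exists>\<tau>\<in>L. F ` geom_simplex \<sigma> \<subseteq> geom_simplex \<tau>"
  shows "continuous_map (realization K) (realization L) F"
  unfolding continuous_map_def
proof (intro conjI allI impI)
  show "F \<in> topspace (realization K) \<rightarrow> topspace (realization L)"
    using S by (fastforce simp: topspace_realization)
  fix U assume U: "openin (realization L) U"
  show "openin (realization K) {x \<in> topspace (realization K). F x \<in> U}"
  proof (subst openin_realization, intro conjI ballI)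
    show "{x \<in> topspace (realization K). F x \<in> U} \<subseteq> (\<Union>\<sigma>\<in>K. geom_simplex \<sigma>)"
      by (auto simp: topspace_realization)
    fix \<sigma> assume "\<sigma> \<in> K"
    then obtain \<tau> where \<tau>: "\<tau> \<in> L" "F ` geom_simplex \<sigma> \<subseteq> geom_simplex \<tau>" using S by blast
    have c: "continuous_map (subtopology (powertop_real UNIV) (geom_simplex \<sigma>))
               (subtopology (powertop_real UNIV) (geom_simplex \<tau>)) F"
      using F \<tau>(2) by (simp add: continuous_map_in_subtopology continuous_map_from_subtopology image_subset_iff)
    have o: "openin (subtopology (powertop_real UNIV) (geom_simplex \<tau>)) (U \<inter> geom_simplex \<tau>)"
      using U \<tau>(1) by (simp add: openin_realization)
    have "openin (subtopology (powertop_real UNIV) (geom_simplex \<sigma>))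
            {x \<in> topspace (subtopology (powertop_real UNIV) (geom_simplex \<sigma>)). F x \<in> U \<inter> geom_simplex \<tau>}"
      using c o by (rule openin_continuous_map_preimage)
    moreover have "{x \<in> topspace (subtopology (powertop_real UNIV) (geom_simplex \<sigma>)). F x \<in> U \<inter> geom_simplex \<tau>}
       = {x \<in> topspace (realization K). F x \<in> U} \<inter> geom_simplex \<sigma>"
      using \<tau>(2) \<open>\<sigma> \<in> K\<close> by (auto simp: topspace_realization)
    ultimately show "openin (subtopology (powertop_real UNIV) (geom_simplex \<sigma>))
            ({x \<in> topspace (realization K). F x \<in> U} \<inter> geom_simplex \<sigma>)" by simp
  qed
qed



lemma cont_reindex:
  "continuous_map (powertop_real UNIV) (powertop_real UNIV)
     (\<lambda>f. \<lambda>w. if P w then f (h w) else (0::real))"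
proof (subst continuous_map_componentwise_UNIV, intro allI)
  fix w
  show "continuous_map (powertop_real UNIV) euclideanreal (\<lambda>f. if P w then f (h w) else 0)"
  proof (cases "P w")
    case True
    then show ?thesis using continuous_map_product_projection[of "h w" UNIV "\<lambda>_. euclideanreal"] by simp
  next
    case False
    then show ?thesis by simp
  qed
qed

lemma realization_iso:
  fixes \<phi> :: "'v \<Rightarrow> 'w"
  assumes inj: "inj_on \<phi> (\<Union>K)" and fin: "\<forall>\<sigma>\<in>K. finite \<sigma>"
  shows "realization K homeomorphic_space realization ((\<lambda>\<sigma>. \<phi>`\<sigma>) ` K)"
proof -
  define V where "V = \<Union>K"
  define F where "F = (\<lambda>f::'v\<Rightarrow>real. \<lambda>w. if w \<in> \<phi>`V then f (inv_into V \<phi> w) else 0)"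
  define G where "G = (\<lambda>g::'w\<Rightarrow>real. \<lambda>v. if v \<in> V then g (\<phi> v) else 0)"
  have invphi: "inv_into V \<phi> (\<phi> v) = v" if "v \<in> V" for v
    using inj that unfolding V_def by (simp add: inv_into_f_f)
  have FS: "F ` geom_simplex \<sigma> \<subseteq> geom_simplex (\<phi>`\<sigma>)" if "\<sigma> \<in> K" for \<sigma>
  proof
    fix g assume "g \<in> F ` geom_simplex \<sigma>"
    then obtain f where f: "f \<in> geom_simplex \<sigma>" and g: "g = F f" by blast
    have sV: "\<sigma> \<subseteq> V" using that V_def by blast
    have "g v \<ge> 0" for v using f g by (auto simp: F_def geom_simplex_def)
    moreover have "g w = 0" if "w \<notin> \<phi>`\<sigma>" for w
    proof (cases "w \<in> \<phi>`V")
      case True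
      then obtain v where v: "v \<in> V" "w = \<phi> v" by blast
      then have "v \<notin> \<sigma>" using that by blast
      then show ?thesis using f g v invphi by (auto simp: F_def geom_simplex_def)
    qed (simp add: g F_def)
    moreover have "sum g (\<phi>`\<sigma>) = 1"
    proof -
      have "inj_on \<phi> \<sigma>" using inj sV V_def inj_on_subset by blast
      then have "sum g (\<phi>`\<sigma>) = sum (g \<circ> \<phi>) \<sigma>" by (rule sum.reindex)
      also have "\<dots> = sum f \<sigma>"
      proof (rule sum.cong)
        fix x assume "x \<in> \<sigma>"
        then have xV: "x \<in> V" using sV by blast
        then have "\<phi> x \<in> \<phi>`V" by blast
        then show "(g \<circ> \<phi>) x = f x" unfolding g F_def o_def using invphi[OF xV] by simp
      qed simp
      also have "\<dots> = 1" using f by (simp add: geom_simplex_def)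
      finally show ?thesis .
    qed
    ultimately show "g \<in> geom_simplex (\<phi>`\<sigma>)" by (simp add: geom_simplex_def)
  qed
  have GS: "G ` geom_simplex (\<phi>`\<sigma>) \<subseteq> geom_simplex \<sigma>" if "\<sigma> \<in> K" for \<sigma>
  proof
    fix f assume "f \<in> G ` geom_simplex (\<phi>`\<sigma>)"
    then obtain g where g: "g \<in> geom_simplex (\<phi>`\<sigma>)" and f: "f = G g" by blast
    have sV: "\<sigma> \<subseteq> V" using that V_def by blast
    have ij: "inj_on \<phi> V" using inj V_def by simp
    have "f v \<ge> 0" for v using f g by (auto simp: G_def geom_simplex_def)
    moreover have "f v = 0" if "v \<notin> \<sigma>" for v
    proof (cases "v \<in> V")
      case True
      then have "\<phi> v \<notin> \<phi>`\<sigma>" using that sV ij by (auto dest: inj_onD)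
      then show ?thesis using f g True by (auto simp: G_def geom_simplex_def)
    qed (simp add: f G_def)
    moreover have "sum f \<sigma> = 1"
    proof -
      have "inj_on \<phi> \<sigma>" using ij sV inj_on_subset by blast
      then have "sum g (\<phi>`\<sigma>) = sum (g \<circ> \<phi>) \<sigma>" by (rule sum.reindex)
      moreover have "sum f \<sigma> = sum (g \<circ> \<phi>) \<sigma>" using sV by (intro sum.cong) (auto simp: f G_def)
      ultimately show ?thesis using g by (simp add: geom_simplex_def)
    qed
    ultimately show "f \<in> geom_simplex \<sigma>" by (simp add: geom_simplex_def)
  qed
  have cF: "continuous_map (realization K) (realization ((\<lambda>\<sigma>. \<phi>`\<sigma>) ` K)) F"
    unfolding F_def by (rule continuous_realization[OF cont_reindex]) (use FS in \<open>auto simp: F_def\<close>)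
  have cG: "continuous_map (realization ((\<lambda>\<sigma>. \<phi>`\<sigma>) ` K)) (realization K) G"
    unfolding G_def by (rule continuous_realization[OF cont_reindex]) (use GS in \<open>auto simp: G_def\<close>)
  have GF: "G (F f) = f" if fT: "f \<in> topspace (realization K)" for f
  proof -
    obtain \<sigma> where \<sigma>: "\<sigma> \<in> K" "f \<in> geom_simplex \<sigma>" using fT unfolding topspace_realization by blast
    have sV: "\<sigma> \<subseteq> V" using \<sigma> V_def by blast
    show ?thesis
    proof
      fix v show "G (F f) v = f v"
        using \<sigma> sV invphi by (auto simp: G_def F_def geom_simplex_def)
    qed
  qed
  have FG: "F (G g) = g" if gT: "g \<in> topspace (realization ((\<lambda>\<sigma>. \<phi>`\<sigma>) ` K))" for g
  proof -
    obtain \<sigma> where \<sigma>: "\<sigma> \<in> K" "g \<in> geom_simplex (\<phi>`\<sigma>)" using gT unfolding topspace_realization by blast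
    have sV: "\<sigma> \<subseteq> V" using \<sigma> V_def by blast
    show ?thesis
    proof
      fix w show "F (G g) w = g w"
      proof (cases "w \<in> \<phi>`V")
        case True
        then obtain v where v: "v \<in> V" "w = \<phi> v" by blast
        then show ?thesis using invphi by (simp add: F_def G_def)
      next
        case False
        then have "w \<notin> \<phi>`\<sigma>" using sV by blast
        then show ?thesis using False \<sigma> by (simp add: F_def geom_simplex_def)
      qed
    qed
  qed
  have "homeomorphic_maps (realization K) (realization ((\<lambda>\<sigma>. \<phi>`\<sigma>) ` K)) F G"
    unfolding homeomorphic_maps_def using cF cG GF FG by blast
  then show ?thesis by (rule homeomorphic_maps_imp_homeomorphic_space)
qed



no_notation (ASCII) subset_mset  (infix \<open><#\<close> 50)

lemma lcos_mem: "x \<in> a <#\<^bsub>G\<^esub> H \<longleftrightarrow> (\<exists>h\<in>H. x = a \<otimes>\<^bsub>G\<^esub> h)"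
  unfolding l_coset_def by blast
lemma rcos_mem: "x \<in> H #>\<^bsub>G\<^esub> a \<longleftrightarrow> (\<exists>h\<in>H. x = h \<otimes>\<^bsub>G\<^esub> a)"
  unfolding r_coset_def by blast
lemma smult_mem: "x \<in> H <#>\<^bsub>G\<^esub> K \<longleftrightarrow> (\<exists>h\<in>H. \<exists>k\<in>K. x = h \<otimes>\<^bsub>G\<^esub> k)"
  unfolding set_mult_def by blast
lemma lcos_restr: "a <#\<^bsub>G\<lparr>carrier := N\<rparr>\<^esub> H = a <#\<^bsub>G\<^esub> H"
  unfolding l_coset_def by simp

definition phi :: "('a, 'b) monoid_scheme \<Rightarrow> 'a set set \<Rightarrow> 'a set \<Rightarrow> 'a set \<times> 'a set
     \<Rightarrow> ('a set set \<times> 'a set set) + ('a set \<times> 'a set)" where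
  "phi G HH N v = (if fst v \<in> lower_fam G HH N
     then Inl (quot_image G N (fst v), (\<lambda>x. N #>\<^bsub>G\<^esub> x) ` snd v)
     else Inr (fst v \<inter> N, snd v \<inter> N))"

context
  fixes G :: "('a, 'b) monoid_scheme" (structure) and N :: "'a set" and HH :: "'a set set"
  assumes nrm: "N \<lhd> G"
    and subg: "\<forall>H \<in> HH. subgroup H G \<and> H \<noteq> carrier G"
    and sd: "strongly_divided G HH N"
begin

interpretation normal N G by (rule nrm)

lemma N_carr: "n \<in> N \<Longrightarrow> n \<in> carrier G"
  by (rule mem_carrier)

lemma lower_sub: "H \<in> lower_fam G HH N \<Longrightarrow> N \<subseteq> H"
  using sd unfolding strongly_divided_def by blast

lemma lower_left_closed:
  assumes "subgroup H G" "N \<subseteq> H" "g \<in> carrier G" "x \<in> g <# H" "n \<in> N"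
  shows "n \<otimes> x \<in> g <# H"
proof -
  interpret H: subgroup H G by fact
  obtain h where h: "h \<in> H" "x = g \<otimes> h" using assms(4) by (auto simp: lcos_mem)
  have hc: "h \<in> carrier G" using h by auto
  have nc: "n \<in> carrier G" using assms(5) by (rule N_carr)
  have m: "inv g \<otimes> n \<otimes> g \<in> H" using inv_op_closed1[OF assms(3) assms(5)] assms(2) by blast
  have "n \<otimes> x = g \<otimes> ((inv g \<otimes> n \<otimes> g) \<otimes> h)"
    using h hc nc assms(3) by (simp add: m_assoc[symmetric])
  moreover have "(inv g \<otimes> n \<otimes> g) \<otimes> h \<in> H" using m h by simp
  ultimately show ?thesis by (auto simp: lcos_mem)
qed

lemma coset_right_closed:
  assumes "subgroup K G" "g \<in> carrier G" "x \<in> g <# K" "k \<in> K"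
  shows "x \<otimes> k \<in> g <# K"
proof -
  interpret K: subgroup K G by fact
  obtain h where h: "h \<in> K" "x = g \<otimes> h" using assms(3) by (auto simp: lcos_mem)
  then have "x \<otimes> k = g \<otimes> (h \<otimes> k)" using assms by (simp add: m_assoc)
  then show ?thesis using h assms by (auto simp: lcos_mem)
qed

lemma lcos_carr: "subgroup K G \<Longrightarrow> g \<in> carrier G \<Longrightarrow> g <# K \<subseteq> carrier G"
  by (auto simp: lcos_mem subgroup.mem_carrier)

lemma self_in_rcos: "y \<in> carrier G \<Longrightarrow> y \<in> N #> y"
  by (auto simp: rcos_mem intro!: bexI[of _ \<one>])

lemma lower_img_back:
  assumes "subgroup H G" "N \<subseteq> H" "g \<in> carrier G" "y \<in> carrier G" "N #> y \<in> (\<lambda>x. N #> x) ` (g <# H)"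
  shows "y \<in> g <# H"
proof -
  obtain x where x: "x \<in> g <# H" "N #> y = N #> x" using assms(5) by blast
  have "y \<in> N #> x" using self_in_rcos[OF assms(4)] x(2) by simp
  then obtain n where "n \<in> N" "y = n \<otimes> x" by (auto simp: rcos_mem)
  then show ?thesis using lower_left_closed[OF assms(1-3) x(1)] by simp
qed

lemma lower_union:
  assumes "subgroup H G" "N \<subseteq> H" "g \<in> carrier G"
  shows "\<Union>((\<lambda>x. N #> x) ` (g <# H)) = g <# H"
proof
  show "\<Union>((\<lambda>x. N #> x) ` (g <# H)) \<subseteq> g <# H"
    using lower_left_closed[OF assms] by (auto simp: rcos_mem)
  show "g <# H \<subseteq> \<Union>((\<lambda>x. N #> x) ` (g <# H))"
    using self_in_rcos lcos_carr[OF assms(1,3)] by blast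
qed

lemma quot_union:
  assumes "subgroup H G" "N \<subseteq> H"
  shows "\<Union>(quot_image G N H) = H"
proof -
  have "\<one> <# H = H" using assms(1) by (auto simp: lcos_mem subgroup.mem_carrier)
  then show ?thesis using lower_union[OF assms one_closed] by (simp add: quot_image_def)
qed

lemma quot_coset:
  assumes "subgroup H G" "g \<in> carrier G"
  shows "(N #> g) <#\<^bsub>G Mod N\<^esub> quot_image G N H = (\<lambda>x. N #> x) ` (g <# H)"
proof -
  have "(N #> g) <#\<^bsub>G Mod N\<^esub> quot_image G N H = (\<Union>h\<in>H. {(N #> g) <#> (N #> h)})"
    unfolding l_coset_def quot_image_def FactGroup_def by simp
  also have "\<dots> = (\<Union>h\<in>H. {N #> (g \<otimes> h)})"
    using assms by (intro SUP_cong) (auto simp: rcos_sum subgroup.mem_carrier)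
  also have "\<dots> = (\<lambda>x. N #> x) ` (g <# H)"
    unfolding l_coset_def by blast
  finally show ?thesis .
qed

lemma lcos_N:
  assumes "subgroup K G" "n \<in> N"
  shows "n <#\<^bsub>G\<lparr>carrier := N\<rparr>\<^esub> (K \<inter> N) = (n <# K) \<inter> N"
proof -
  interpret K: subgroup K G by fact
  have nc: "n \<in> carrier G" using assms(2) by (rule N_carr)
  show ?thesis unfolding lcos_restr
  proof (intro equalityI subsetI)
    fix x assume "x \<in> n <# (K \<inter> N)"
    then show "x \<in> (n <# K) \<inter> N" using assms(2) by (auto simp: lcos_mem)
  next
    fix x assume x: "x \<in> (n <# K) \<inter> N"
    then obtain k where k: "k \<in> K" "x = n \<otimes> k" by (auto simp: lcos_mem)
    have kc: "k \<in> carrier G" using k by auto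
    have "k = inv n \<otimes> x" using k kc nc by (simp add: m_assoc[symmetric])
    then have "k \<in> N" using x assms(2) by simp
    then show "x \<in> n <# (K \<inter> N)" using k by (auto simp: lcos_mem)
  qed
qed

lemma upper_meet:
  assumes "finite F" "F \<noteq> {}" "F \<subseteq> upper_fam G HH N" "x \<in> carrier G"
  shows "\<exists>k\<in>\<Inter>F. x \<otimes> k \<in> N"
proof -
  have "\<Inter>F <#> N = carrier G" using sd assms unfolding strongly_divided_def by blast
  then have "inv x \<in> \<Inter>F <#> N" using assms(4) by simp
  then obtain k n where kn: "k \<in> \<Inter>F" "n \<in> N" "inv x = k \<otimes> n" by (auto simp: smult_mem)
  obtain K where "K \<in> F" using assms(2) by blast
  then have "subgroup K G" using assms(3) subg by (auto simp: upper_fam_def)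
  then have kc: "k \<in> carrier G" using kn(1) \<open>K \<in> F\<close> by (auto simp: subgroup.mem_carrier)
  have nc: "n \<in> carrier G" using kn(2) by (rule N_carr)
  have "x \<otimes> k = inv n"
  proof -
    have "x \<otimes> k = x \<otimes> (k \<otimes> n) \<otimes> inv n" using kc nc assms(4) by (simp add: m_assoc)
    also have "\<dots> = inv n" using assms(4) nc by (simp add: kn(3)[symmetric])
    finally show ?thesis .
  qed
  moreover have "inv n \<in> N" using kn(2) by (rule m_inv_closed)
  ultimately show ?thesis using kn(1) by metis
qed

lemma upper_eq:
  assumes "K1 \<in> upper_fam G HH N" "K2 \<in> upper_fam G HH N" "K1 \<inter> N = K2 \<inter> N"
  shows "K1 = K2"
proof -
  have key: "A \<subseteq> B" if "A \<in> upper_fam G HH N" "B \<in> upper_fam G HH N" "A \<inter> N = B \<inter> N" for A B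
  proof
    fix a assume a: "a \<in> A"
    have sA: "subgroup A G" and sB: "subgroup B G" using that subg by (auto simp: upper_fam_def)
    have "finite {A, B} \<and> {A, B} \<noteq> {} \<and> {A, B} \<subseteq> upper_fam G HH N" using that by auto
    then have "(\<Inter>{A, B}) <#> N = carrier G" using sd unfolding strongly_divided_def by blast
    moreover have "a \<in> carrier G" using a sA by (auto simp: subgroup.mem_carrier)
    ultimately have "a \<in> (A \<inter> B) <#> N" by simp
    then obtain x n where xn: "x \<in> A" "x \<in> B" "n \<in> N" "a = x \<otimes> n" by (auto simp: smult_mem)
    have xc: "x \<in> carrier G" using xn sA by (auto simp: subgroup.mem_carrier)
    have nc: "n \<in> carrier G" using xn(3) by (rule N_carr)
    have "n = inv x \<otimes> a" using xn(4) xc nc by (simp add: m_assoc[symmetric])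
    then have "n \<in> A" using a xn(1) sA by (simp add: subgroup.m_closed subgroup.m_inv_closed)
    then have "n \<in> B" using xn(3) that(3) by blast
    then show "a \<in> B" using xn sB by (simp add: subgroup.m_closed)
  qed
  show ?thesis using key assms by blast
qed

lemma upper_hits_N:
  assumes "K \<in> upper_fam G HH N" "g \<in> carrier G"
  shows "\<exists>n\<in>N. n \<in> g <# K"
  using upper_meet[of "{K}" g] assms by (auto simp: lcos_mem)


lemma upper_iff: "K \<in> HH \<Longrightarrow> K \<notin> lower_fam G HH N \<longleftrightarrow> K \<in> upper_fam G HH N"
  by (auto simp: lower_fam_def upper_fam_def)

lemma phi_Inl: "phi G HH N (H, C) = Inl a \<Longrightarrow> H \<in> lower_fam G HH N \<and> a = (quot_image G N H, (\<lambda>x. N #> x) ` C)"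
  by (auto simp: phi_def split: if_splits)

lemma phi_Inr: "phi G HH N (H, C) = Inr b \<Longrightarrow> H \<notin> lower_fam G HH N \<and> b = (H \<inter> N, C \<inter> N)"
  by (auto simp: phi_def split: if_splits)

lemma phi_low: "H \<in> lower_fam G HH N \<Longrightarrow> phi G HH N (H, C) = Inl (quot_image G N H, (\<lambda>x. N #> x) ` C)"
  by (simp add: phi_def)

lemma phi_up: "H \<notin> lower_fam G HH N \<Longrightarrow> phi G HH N (H, C) = Inr (H \<inter> N, C \<inter> N)"
  by (simp add: phi_def)

lemma inj_phi: "inj_on (phi G HH N) {(K, g <# K) | g K. g \<in> carrier G \<and> K \<in> HH}"
proof (rule inj_onI)
  fix v w assume v: "v \<in> {(K, g <# K) | g K. g \<in> carrier G \<and> K \<in> HH}"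
    and w: "w \<in> {(K, g <# K) | g K. g \<in> carrier G \<and> K \<in> HH}" and eq: "phi G HH N v = phi G HH N w"
  obtain K1 g1 where v': "v = (K1, g1 <# K1)" "g1 \<in> carrier G" "K1 \<in> HH" using v by blast
  obtain K2 g2 where w': "w = (K2, g2 <# K2)" "g2 \<in> carrier G" "K2 \<in> HH" using w by blast
  have s1: "subgroup K1 G" and s2: "subgroup K2 G" using v' w' subg by auto
  show "v = w"
  proof (cases "K1 \<in> lower_fam G HH N")
    case True
    then have "phi G HH N w = Inl (quot_image G N K1, (\<lambda>x. N #> x) ` (g1 <# K1))"
      using eq v' phi_low by metis
    from phi_Inl[OF this[unfolded w'(1)]] have L2: "K2 \<in> lower_fam G HH N"
      and e: "quot_image G N K1 = quot_image G N K2" "(\<lambda>x. N #> x) ` (g1 <# K1) = (\<lambda>x. N #> x) ` (g2 <# K2)"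
      by simp_all
    have "K1 = \<Union>(quot_image G N K1)" using quot_union[OF s1 lower_sub[OF True]] by (rule sym)
    also have "\<dots> = \<Union>(quot_image G N K2)" using e(1) by (rule arg_cong)
    also have "\<dots> = K2" by (rule quot_union[OF s2 lower_sub[OF L2]])
    finally have "K1 = K2" .
    have "g1 <# K1 = \<Union>((\<lambda>x. N #> x) ` (g1 <# K1))" using lower_union[OF s1 lower_sub[OF True] v'(2)] by (rule sym)
    also have "\<dots> = \<Union>((\<lambda>x. N #> x) ` (g2 <# K2))" using e(2) by (rule arg_cong)
    also have "\<dots> = g2 <# K2" by (rule lower_union[OF s2 lower_sub[OF L2] w'(2)])
    finally have "g1 <# K1 = g2 <# K2" .
    show ?thesis using v' w' \<open>K1 = K2\<close> \<open>g1 <# K1 = g2 <# K2\<close> by simp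
  next
    case False
    then have "phi G HH N w = Inr (K1 \<inter> N, (g1 <# K1) \<inter> N)"
      using eq v' phi_up by metis
    from phi_Inr[OF this[unfolded w'(1)]] have L2: "K2 \<notin> lower_fam G HH N"
      and e: "K1 \<inter> N = K2 \<inter> N" "(g1 <# K1) \<inter> N = (g2 <# K2) \<inter> N"
      by simp_all
    have U1: "K1 \<in> upper_fam G HH N" using False upper_iff v' by blast
    have U2: "K2 \<in> upper_fam G HH N" using L2 upper_iff w' by blast
    have K: "K1 = K2" using upper_eq[OF U1 U2 e(1)] .
    obtain n where n: "n \<in> N" "n \<in> g1 <# K1" using upper_hits_N[OF U1 v'(2)] by blast
    then have "n \<in> g2 <# K2" using e(2) by blast
    then have "g2 <# K2 = n <# K2" using l_repr_independence[OF _ w'(2) s2] by blast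
    moreover have "g1 <# K1 = n <# K1" using l_repr_independence[OF n(2) v'(2) s1] .
    ultimately show ?thesis using v' w' K by simp
  qed
qed


lemma lower_in: "H \<in> lower_fam G HH N \<Longrightarrow> H \<in> HH"
  by (simp add: lower_fam_def)
lemma upper_in: "H \<in> upper_fam G HH N \<Longrightarrow> H \<in> HH"
  by (simp add: upper_fam_def)
lemma sub_of: "H \<in> HH \<Longrightarrow> subgroup H G"
  using subg by blast

lemma repA:
  assumes "a \<in> A" "A \<in> coset_complex (G Mod N) (quot_fam G HH N)"
  shows "\<exists>H g. H \<in> lower_fam G HH N \<and> g \<in> carrier G \<and> a = (quot_image G N H, (\<lambda>x. N #> x) ` (g <# H))"
proof -
  obtain c Q where cQ: "a = (Q, c <#\<^bsub>G Mod N\<^esub> Q)" "c \<in> carrier (G Mod N)" "Q \<in> quot_fam G HH N"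
    using assms unfolding coset_complex_def by blast
  obtain g where g: "g \<in> carrier G" "c = N #> g" using cQ(2) unfolding carrier_FactGroup by blast
  obtain H where H: "H \<in> lower_fam G HH N" "Q = quot_image G N H" using cQ(3) unfolding quot_fam_def by blast
  have "c <#\<^bsub>G Mod N\<^esub> Q = (\<lambda>x. N #> x) ` (g <# H)"
    using quot_coset[OF sub_of[OF lower_in[OF H(1)]] g(1)] g(2) H(2) by simp
  then show ?thesis using cQ(1) H g(1) by blast
qed

lemma repB:
  assumes "b \<in> B" "B \<in> coset_complex (G\<lparr>carrier := N\<rparr>) (inter_fam G HH N)"
  shows "\<exists>K n. K \<in> upper_fam G HH N \<and> n \<in> N \<and> b = (K \<inter> N, (n <# K) \<inter> N)"
proof -
  have "finite B \<and> B \<noteq> {} \<and> B \<subseteq> {(K, g <#\<^bsub>G\<lparr>carrier := N\<rparr>\<^esub> K) | g K. g \<in> carrier (G\<lparr>carrier := N\<rparr>) \<and> K \<in> inter_fam G HH N}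
     \<and> \<Inter>(snd ` B) \<noteq> {}"
    using assms(2) unfolding coset_complex_def by (rule CollectD)
  then have "B \<subseteq> {(K, g <#\<^bsub>G\<lparr>carrier := N\<rparr>\<^esub> K) | g K. g \<in> carrier (G\<lparr>carrier := N\<rparr>) \<and> K \<in> inter_fam G HH N}"
    by (elim conjE)
  then have "b \<in> {(K, g <#\<^bsub>G\<lparr>carrier := N\<rparr>\<^esub> K) | g K. g \<in> carrier (G\<lparr>carrier := N\<rparr>) \<and> K \<in> inter_fam G HH N}"
    using assms(1) by (rule subsetD)
  then obtain n K' where nK0: "b = (K', n <#\<^bsub>G\<lparr>carrier := N\<rparr>\<^esub> K')" "n \<in> carrier (G\<lparr>carrier := N\<rparr>)" "K' \<in> inter_fam G HH N"
    unfolding mem_Collect_eq by (elim exE conjE)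
  have nK: "b = (K', n <#\<^bsub>G\<lparr>carrier := N\<rparr>\<^esub> K')" "n \<in> N" "K' \<in> inter_fam G HH N"
    using nK0 by simp_all
  obtain K where K: "K \<in> upper_fam G HH N" "K' = K \<inter> N" using nK(3) unfolding inter_fam_def by blast
  have "n <#\<^bsub>G\<lparr>carrier := N\<rparr>\<^esub> K' = (n <# K) \<inter> N"
    using lcos_N[OF sub_of[OF upper_in[OF K(1)]] nK(2)] K(2) by simp
  then show ?thesis using nK K by blast
qed

lemma img_join:
  assumes "\<sigma> \<in> coset_complex G HH"
  shows "phi G HH N ` \<sigma> \<in> simplicial_join (coset_complex (G Mod N) (quot_fam G HH N))
                                         (coset_complex (G\<lparr>carrier := N\<rparr>) (inter_fam G HH N))"
proof -
  have fin: "finite \<sigma>" and ne: "\<sigma> \<noteq> {}"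
    and sV: "\<sigma> \<subseteq> {(K, g <# K) | g K. g \<in> carrier G \<and> K \<in> HH}"
    and int: "\<Inter>(snd ` \<sigma>) \<noteq> {}"
    using assms unfolding coset_complex_def by auto
  obtain x where x: "x \<in> \<Inter>(snd ` \<sigma>)" using int by blast
  define A where "A = {a. Inl a \<in> phi G HH N ` \<sigma>}"
  define B where "B = {b. Inr b \<in> phi G HH N ` \<sigma>}"
  have split: "phi G HH N ` \<sigma> = Inl ` A \<union> Inr ` B"
  proof (intro equalityI subsetI)
    fix z assume "z \<in> phi G HH N ` \<sigma>"
    then show "z \<in> Inl ` A \<union> Inr ` B" by (cases z) (auto simp: A_def B_def)
  qed (auto simp: A_def B_def)
  have finphi: "finite (phi G HH N ` \<sigma>)" using fin by simp
  have vform: "\<exists>g K. v = (K, g <# K) \<and> g \<in> carrier G \<and> K \<in> HH" if "v \<in> \<sigma>" for v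
    using that sV by blast
  have xc: "x \<in> carrier G"
  proof -
    obtain v where "v \<in> \<sigma>" using ne by blast
    then obtain g K where v: "v = (K, g <# K)" "g \<in> carrier G" "K \<in> HH" using vform by blast
    then have "x \<in> g <# K" using x \<open>v \<in> \<sigma>\<close> by force
    then show ?thesis using lcos_carr[OF sub_of[OF v(3)] v(2)] by blast
  qed
  have Ain: "A \<in> insert {} (coset_complex (G Mod N) (quot_fam G HH N))"
  proof (cases "A = {}")
    case False
    have "finite (Inl ` A \<union> Inr ` B)" using finphi split by simp
    then have finA: "finite A" by (auto simp: finite_image_iff)
    have vert: "a \<in> {(K, c <#\<^bsub>G Mod N\<^esub> K) | c K. c \<in> carrier (G Mod N) \<and> K \<in> quot_fam G HH N}
        \<and> N #> x \<in> snd a" if aA: "a \<in> A" for a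
    proof -
      have "Inl a \<in> phi G HH N ` \<sigma>" using aA A_def by simp
      then obtain v where v: "v \<in> \<sigma>" "phi G HH N v = Inl a" by (metis imageE)
      obtain g K where vK: "v = (K, g <# K)" "g \<in> carrier G" "K \<in> HH" using vform v(1) by blast
      have low: "K \<in> lower_fam G HH N" and a: "a = (quot_image G N K, (\<lambda>x. N #> x) ` (g <# K))"
        using phi_Inl[of K "g <# K" a] v(2) vK(1) by auto
      have "(\<lambda>x. N #> x) ` (g <# K) = (N #> g) <#\<^bsub>G Mod N\<^esub> quot_image G N K"
        using quot_coset[OF sub_of[OF vK(3)] vK(2)] by simp
      moreover have "N #> g \<in> carrier (G Mod N)" using vK(2) unfolding carrier_FactGroup by blast
      moreover have "quot_image G N K \<in> quot_fam G HH N" using low unfolding quot_fam_def by blast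
      moreover have "x \<in> g <# K" using x v(1) vK(1) by force
      ultimately show ?thesis using a by auto
    qed
    have "\<Inter>(snd ` A) \<noteq> {}" using vert by blast
    then have "A \<in> coset_complex (G Mod N) (quot_fam G HH N)"
      unfolding coset_complex_def using finA False vert by blast
    then show ?thesis by simp
  qed simp
  have Bin: "B \<in> insert {} (coset_complex (G\<lparr>carrier := N\<rparr>) (inter_fam G HH N))"
  proof (cases "B = {}")
    case False
    have "finite (Inl ` A \<union> Inr ` B)" using finphi split by simp
    then have finB: "finite B" by (auto simp: finite_image_iff)
    define F where "F = fst ` {v \<in> \<sigma>. fst v \<notin> lower_fam G HH N}"
    have Fsub: "F \<subseteq> upper_fam G HH N"
    proof
      fix K assume "K \<in> F"
      then obtain v where v: "v \<in> \<sigma>" "fst v \<notin> lower_fam G HH N" "K = fst v" unfolding F_def by blast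
      then have "K \<in> HH" using vform[OF v(1)] v(3) by (metis fst_conv)
      then show "K \<in> upper_fam G HH N" using v upper_iff by blast
    qed
    have Fne: "F \<noteq> {}"
    proof -
      obtain b where "b \<in> B" using False by blast
      then have "Inr b \<in> phi G HH N ` \<sigma>" unfolding B_def by simp
      then obtain v where v: "v \<in> \<sigma>" "phi G HH N v = Inr b" by (metis imageE)
      then have "fst v \<notin> lower_fam G HH N" using phi_Inr[of "fst v" "snd v" b] by simp
      then show ?thesis using v unfolding F_def by blast
    qed
    have Ffin: "finite F" unfolding F_def using fin by simp
    obtain k where k: "k \<in> \<Inter>F" "x \<otimes> k \<in> N" using upper_meet[OF Ffin Fne Fsub xc] by blast
    have vert: "b \<in> {(K, c <#\<^bsub>G\<lparr>carrier := N\<rparr>\<^esub> K) | c K. c \<in> carrier (G\<lparr>carrier := N\<rparr>) \<and> K \<in> inter_fam G HH N}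
        \<and> x \<otimes> k \<in> snd b" if bB: "b \<in> B" for b
    proof -
      have "Inr b \<in> phi G HH N ` \<sigma>" using bB B_def by simp
      then obtain v where v: "v \<in> \<sigma>" "phi G HH N v = Inr b" by (metis imageE)
      obtain g K where vK: "v = (K, g <# K)" "g \<in> carrier G" "K \<in> HH" using vform v(1) by blast
      have up: "K \<notin> lower_fam G HH N" and b: "b = (K \<inter> N, (g <# K) \<inter> N)"
        using phi_Inr[of K "g <# K" b] v(2) vK(1) by auto
      have U: "K \<in> upper_fam G HH N" using up vK(3) upper_iff by blast
      obtain n where n: "n \<in> N" "n \<in> g <# K" using upper_hits_N[OF U vK(2)] by blast
      have "g <# K = n <# K" using l_repr_independence[OF n(2) vK(2) sub_of[OF vK(3)]] .
      then have "(g <# K) \<inter> N = n <#\<^bsub>G\<lparr>carrier := N\<rparr>\<^esub> (K \<inter> N)"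
        using lcos_N[OF sub_of[OF vK(3)] n(1)] by simp
      moreover have "K \<inter> N \<in> inter_fam G HH N" using U unfolding inter_fam_def by blast
      moreover have "n \<in> carrier (G\<lparr>carrier := N\<rparr>)" using n by simp
      moreover have "x \<otimes> k \<in> g <# K"
      proof -
        have "x \<in> g <# K" using x v(1) vK(1) by force
        moreover have "K \<in> F" unfolding F_def using v(1) vK(1) up by force
        then have "k \<in> K" using k by blast
        ultimately show ?thesis using coset_right_closed[OF sub_of[OF vK(3)] vK(2)] by blast
      qed
      ultimately show ?thesis using b k(2) by auto
    qed
    have "\<Inter>(snd ` B) \<noteq> {}" using vert by blast
    then have "B \<in> coset_complex (G\<lparr>carrier := N\<rparr>) (inter_fam G HH N)"
      unfolding coset_complex_def using finB False vert by blast
    then show ?thesis by simp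
  qed simp
  have "phi G HH N ` \<sigma> \<noteq> {}" using ne by simp
  then show ?thesis unfolding simplicial_join_def using split Ain Bin by blast
qed


lemma join_img:
  assumes "\<tau> \<in> simplicial_join (coset_complex (G Mod N) (quot_fam G HH N))
                                         (coset_complex (G\<lparr>carrier := N\<rparr>) (inter_fam G HH N))"
  shows "\<tau> \<in> (\<lambda>\<sigma>. phi G HH N ` \<sigma>) ` coset_complex G HH"
proof -
  define V where "V = {(K, g <# K) | g K. g \<in> carrier G \<and> K \<in> HH}"
  obtain A B where AB: "\<tau> = Inl ` A \<union> Inr ` B" "A \<in> insert {} (coset_complex (G Mod N) (quot_fam G HH N))"
      "B \<in> insert {} (coset_complex (G\<lparr>carrier := N\<rparr>) (inter_fam G HH N))" "\<tau> \<noteq> {}"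
    using assms unfolding simplicial_join_def by blast
  have repA': "\<exists>H g. H \<in> lower_fam G HH N \<and> g \<in> carrier G \<and> a = (quot_image G N H, (\<lambda>x. N #> x) ` (g <# H))"
    if "a \<in> A" for a
    using repA[OF that] AB(2) that by auto
  have repB': "\<exists>K n. K \<in> upper_fam G HH N \<and> n \<in> N \<and> b = (K \<inter> N, (n <# K) \<inter> N)"
    if "b \<in> B" for b
    using repB[OF that] AB(3) that by auto
  define \<sigma> where "\<sigma> = {v \<in> V. phi G HH N v \<in> \<tau>}"
  have img: "phi G HH N ` \<sigma> = \<tau>"
  proof (intro equalityI subsetI)
    fix z assume "z \<in> phi G HH N ` \<sigma>" then show "z \<in> \<tau>" unfolding \<sigma>_def by blast
  next
    fix z assume z: "z \<in> \<tau>"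
    have "\<exists>v \<in> V. phi G HH N v = z"
    proof (cases z)
      case (Inl a)
      then have "a \<in> A" using z AB(1) by auto
      then obtain H g where Hg: "H \<in> lower_fam G HH N" "g \<in> carrier G"
        "a = (quot_image G N H, (\<lambda>x. N #> x) ` (g <# H))" using repA' by blast
      have "(H, g <# H) \<in> V" using Hg lower_in unfolding V_def by blast
      moreover have "phi G HH N (H, g <# H) = z" using Hg Inl phi_low by simp
      ultimately show ?thesis by blast
    next
      case (Inr b)
      then have "b \<in> B" using z AB(1) by auto
      then obtain K n where Kn: "K \<in> upper_fam G HH N" "n \<in> N" "b = (K \<inter> N, (n <# K) \<inter> N)"
        using repB' by blast
      have "(K, n <# K) \<in> V" using Kn upper_in N_carr unfolding V_def by blast
      moreover have "K \<notin> lower_fam G HH N" using Kn(1) upper_iff upper_in by blast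
      then have "phi G HH N (K, n <# K) = z" using Kn Inr phi_up by simp
      ultimately show ?thesis by blast
    qed
    then show "z \<in> phi G HH N ` \<sigma>" using z unfolding \<sigma>_def by blast
  qed
  have sV: "\<sigma> \<subseteq> V" unfolding \<sigma>_def by blast
  have injV: "inj_on (phi G HH N) V" unfolding V_def by (rule inj_phi)
  have finA: "finite A" using AB(2) unfolding coset_complex_def by auto
  have finB: "finite B" using AB(3) unfolding coset_complex_def by auto
  have "finite \<tau>" using AB(1) finA finB by simp
  then have fin: "finite \<sigma>" using img injV sV by (metis finite_imageD inj_on_subset)
  have ne: "\<sigma> \<noteq> {}" using img AB(4) by auto
  have vform: "\<exists>g K. v = (K, g <# K) \<and> g \<in> carrier G \<and> K \<in> HH" if "v \<in> \<sigma>" for v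
    using that sV unfolding V_def by blast
  have inA: "(quot_image G N K, (\<lambda>x. N #> x) ` C) \<in> A" if "(K, C) \<in> \<sigma>" "K \<in> lower_fam G HH N" for K C
  proof -
    have "phi G HH N (K, C) \<in> \<tau>" using that(1) unfolding \<sigma>_def by blast
    then show ?thesis using phi_low[OF that(2)] AB(1) by auto
  qed
  have inB: "(K \<inter> N, C \<inter> N) \<in> B" if "(K, C) \<in> \<sigma>" "K \<notin> lower_fam G HH N" for K C
  proof -
    have "phi G HH N (K, C) \<in> \<tau>" using that(1) unfolding \<sigma>_def by blast
    then show ?thesis using phi_up[OF that(2)] AB(1) by auto
  qed
  have ptA: "\<exists>y \<in> carrier G. \<forall>K C g. (K, C) \<in> \<sigma> \<longrightarrow> K \<in> lower_fam G HH N \<longrightarrow> C = g <# K \<longrightarrow> g \<in> carrier G \<longrightarrow> y \<in> C"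
    if Ane: "A \<noteq> {}"
  proof -
    have Ac: "A \<in> coset_complex (G Mod N) (quot_fam G HH N)" using AB(2) that by simp
    then obtain c where c: "c \<in> \<Inter>(snd ` A)" unfolding coset_complex_def by blast
    obtain a0 where a0: "a0 \<in> A" using Ane by blast
    obtain H0 g0 where H0: "H0 \<in> lower_fam G HH N" "g0 \<in> carrier G"
      "a0 = (quot_image G N H0, (\<lambda>x. N #> x) ` (g0 <# H0))" using repA'[OF a0] by blast
    have "c \<in> (\<lambda>x. N #> x) ` (g0 <# H0)" using c a0 H0(3) by force
    then obtain y where y: "y \<in> g0 <# H0" "c = N #> y" by blast
    have yc: "y \<in> carrier G" using y(1) lcos_carr[OF sub_of[OF lower_in[OF H0(1)]] H0(2)] by blast
    show ?thesis
    proof (intro bexI[OF _ yc] allI impI)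
      fix K C g assume KC: "(K, C) \<in> \<sigma>" "K \<in> lower_fam G HH N" "C = g <# K" "g \<in> carrier G"
      have "(quot_image G N K, (\<lambda>x. N #> x) ` C) \<in> A" using inA KC by blast
      then have "N #> y \<in> (\<lambda>x. N #> x) ` (g <# K)" using c y(2) KC(3) by force
      then show "y \<in> C" using lower_img_back[OF sub_of[OF lower_in[OF KC(2)]] lower_sub[OF KC(2)] KC(4) yc] KC(3) by simp
    qed
  qed
  have ptB: "\<exists>m \<in> N. \<forall>K C. (K, C) \<in> \<sigma> \<longrightarrow> K \<notin> lower_fam G HH N \<longrightarrow> m \<in> C"
    if Bne: "B \<noteq> {}"
  proof -
    have Bc: "B \<in> coset_complex (G\<lparr>carrier := N\<rparr>) (inter_fam G HH N)" using AB(3) that by simp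
    then obtain m where m: "m \<in> \<Inter>(snd ` B)" unfolding coset_complex_def by blast
    obtain b0 where b0: "b0 \<in> B" using Bne by blast
    obtain K0 n0 where K0: "b0 = (K0 \<inter> N, (n0 <# K0) \<inter> N)" using repB'[OF b0] by blast
    have mN: "m \<in> N" using m b0 K0 by force
    show ?thesis
    proof (intro bexI[OF _ mN] allI impI)
      fix K C assume KC: "(K, C) \<in> \<sigma>" "K \<notin> lower_fam G HH N"
      have "(K \<inter> N, C \<inter> N) \<in> B" using inB KC by blast
      then show "m \<in> C" using m by force
    qed
  qed
  have noA: "K \<notin> lower_fam G HH N" if "A = {}" "(K, C) \<in> \<sigma>" for K C
    using inA that by blast
  have noB: "K \<in> lower_fam G HH N" if "B = {}" "(K, C) \<in> \<sigma>" for K C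
    using inB that by blast
  have int: "\<Inter>(snd ` \<sigma>) \<noteq> {}"
  proof (cases "A = {}")
    case True
    then have "B \<noteq> {}" using AB(1,4) by auto
    then obtain m where m: "m \<in> N" "\<forall>K C. (K, C) \<in> \<sigma> \<longrightarrow> K \<notin> lower_fam G HH N \<longrightarrow> m \<in> C"
      using ptB by blast
    have "m \<in> \<Inter>(snd ` \<sigma>)" using m noA[OF True] by auto
    then show ?thesis by blast
  next
    case AF: False
    obtain y where y: "y \<in> carrier G" "\<forall>K C g. (K, C) \<in> \<sigma> \<longrightarrow> K \<in> lower_fam G HH N \<longrightarrow> C = g <# K \<longrightarrow> g \<in> carrier G \<longrightarrow> y \<in> C"
      using ptA[OF AF] by blast
    have yl: "y \<in> C" if KCs: "(K, C) \<in> \<sigma>" "K \<in> lower_fam G HH N" for K C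
    proof -
      obtain g K' where "(K, C) = (K', g <# K')" "g \<in> carrier G" using vform[OF KCs(1)] by blast
      then show ?thesis using y KCs by blast
    qed
    show ?thesis
    proof (cases "B = {}")
      case True
      have "y \<in> \<Inter>(snd ` \<sigma>)" using yl noB[OF True] by auto
      then show ?thesis by blast
    next
      case BF: False
      obtain m where m: "m \<in> N" "\<forall>K C. (K, C) \<in> \<sigma> \<longrightarrow> K \<notin> lower_fam G HH N \<longrightarrow> m \<in> C"
        using ptB[OF BF] by blast
      have mc: "m \<in> carrier G" using m(1) by (rule N_carr)
      define F where "F = fst ` {v \<in> \<sigma>. fst v \<notin> lower_fam G HH N}"
      have Fsub: "F \<subseteq> upper_fam G HH N"
      proof
        fix K assume "K \<in> F"
        then obtain v where v: "v \<in> \<sigma>" "fst v \<notin> lower_fam G HH N" "K = fst v" unfolding F_def by blast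
        then have "K \<in> HH" using vform[OF v(1)] v(3) by (metis fst_conv)
        then show "K \<in> upper_fam G HH N" using v upper_iff by blast
      qed
      have Fne: "F \<noteq> {}"
      proof -
        obtain b where "b \<in> B" using BF by blast
        then have "Inr b \<in> phi G HH N ` \<sigma>" using img AB(1) by simp
        then obtain v where v: "v \<in> \<sigma>" "phi G HH N v = Inr b" by (metis imageE)
        then have "fst v \<notin> lower_fam G HH N" using phi_Inr[of "fst v" "snd v" b] by simp
        then show ?thesis using v unfolding F_def by blast
      qed
      have Ffin: "finite F" unfolding F_def using fin by simp
      have ic: "inv y \<otimes> m \<in> carrier G" using y(1) mc by simp
      obtain k where k: "k \<in> \<Inter>F" "inv y \<otimes> m \<otimes> k \<in> N" using upper_meet[OF Ffin Fne Fsub ic] by blast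
      have kc: "k \<in> carrier G"
      proof -
        obtain K where "K \<in> F" using Fne by blast
        then have "k \<in> K" "subgroup K G" using k Fsub sub_of upper_in by blast+
        then show ?thesis by (simp add: subgroup.mem_carrier)
      qed
      have eq: "y \<otimes> (inv y \<otimes> m \<otimes> k) = m \<otimes> k" using y(1) mc kc by (simp add: m_assoc[symmetric])
      have "m \<otimes> k \<in> C" if vs: "v \<in> \<sigma>" "v = (K, C)" for v K C
      proof -
        obtain g K' where gK: "(K, C) = (K', g <# K')" "g \<in> carrier G" "K' \<in> HH" using vform vs by blast
        have sK: "subgroup K G" using gK sub_of by simp
        show ?thesis
        proof (cases "K \<in> lower_fam G HH N")
          case True
          have "y \<in> C" using yl vs True by blast
          moreover have "inv y \<otimes> m \<otimes> k \<in> K" using k(2) lower_sub[OF True] by blast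
          ultimately have "y \<otimes> (inv y \<otimes> m \<otimes> k) \<in> C"
            using coset_right_closed[OF sK gK(2)] gK(1) by simp
          then show ?thesis using eq by simp
        next
          case False
          have "m \<in> C" using m(2) vs False by blast
          moreover have "K \<in> F" unfolding F_def using vs False by force
          then have "k \<in> K" using k(1) by blast
          ultimately show ?thesis using coset_right_closed[OF sK gK(2)] gK(1) by simp
        qed
      qed
      then have "m \<otimes> k \<in> \<Inter>(snd ` \<sigma>)" by force
      then show ?thesis by blast
    qed
  qed
  have "\<sigma> \<in> coset_complex G HH"
    unfolding coset_complex_def using fin ne sV int unfolding V_def by blast
  then show ?thesis using img by blast
qed

end

theorem theorem3p19:
  fixes G :: "('a, 'b) monoid_scheme" and N :: "'a set" and \<H> :: "'a set set"
  assumes "group G"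
    and "N \<lhd> G"
    and "\<forall>H \<in> \<H>. subgroup H G \<and> H \<noteq> carrier G"
    and "strongly_divided G \<H> N"
  shows "realization (coset_complex G \<H>) homotopy_equivalent_space
           realization (simplicial_join (coset_complex (G Mod N) (quot_fam G \<H> N))
                                         (coset_complex (G\<lparr>carrier := N\<rparr>) (inter_fam G \<H> N)))"
proof -
  have eqc: "(\<lambda>\<sigma>. phi G \<H> N ` \<sigma>) ` coset_complex G \<H> =
      simplicial_join (coset_complex (G Mod N) (quot_fam G \<H> N))
                      (coset_complex (G\<lparr>carrier := N\<rparr>) (inter_fam G \<H> N))"
  proof (intro equalityI subsetI)
    fix t assume "t \<in> (\<lambda>\<sigma>. phi G \<H> N ` \<sigma>) ` coset_complex G \<H>"
    then obtain \<sigma> where "\<sigma> \<in> coset_complex G \<H>" "t = phi G \<H> N ` \<sigma>" by blast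
    then show "t \<in> simplicial_join (coset_complex (G Mod N) (quot_fam G \<H> N))
                      (coset_complex (G\<lparr>carrier := N\<rparr>) (inter_fam G \<H> N))"
      using img_join[OF assms(2) assms(3) assms(4)] by blast
  next
    fix t assume "t \<in> simplicial_join (coset_complex (G Mod N) (quot_fam G \<H> N))
                      (coset_complex (G\<lparr>carrier := N\<rparr>) (inter_fam G \<H> N))"
    then show "t \<in> (\<lambda>\<sigma>. phi G \<H> N ` \<sigma>) ` coset_complex G \<H>"
      using join_img[OF assms(2) assms(3) assms(4)] by blast
  qed
  have sub: "\<Union>(coset_complex G \<H>) \<subseteq> {(K, g <#\<^bsub>G\<^esub> K) | g K. g \<in> carrier G \<and> K \<in> \<H>}"
    unfolding coset_complex_def by blast
  have inj: "inj_on (phi G \<H> N) (\<Union>(coset_complex G \<H>))"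
    using inj_phi[OF assms(2) assms(3) assms(4)] sub by (rule inj_on_subset)
  have fin: "\<forall>\<sigma>\<in>coset_complex G \<H>. finite \<sigma>" unfolding coset_complex_def by blast
  have "realization (coset_complex G \<H>) homeomorphic_space
          realization ((\<lambda>\<sigma>. phi G \<H> N ` \<sigma>) ` coset_complex G \<H>)"
    by (rule realization_iso[OF inj fin])
  then show ?thesis unfolding eqc by (rule homeomorphic_imp_homotopy_equivalent_space)
qed

end
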